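(* Let $T$ be a permutation tableau of length $n$, let $\pi=\xi(T)=\pi_1\pi_2\cdots\pi_n$, and let $\bar\pi=(n+1-\pi_n,\ldots,n+1-\pi_2,n+1-\pi_1)$ be the reverse complement of $\pi$. Then $$\mathrm{inv}(T)=f_{32\text{--}1}(\bar\pi).$$ Equivalently, $\mathrm{inv}(T)=f_{3\text{--}21}(\pi)$.
   Context: Permutation tableaux. Draw a Ferrers diagram in English convention: rows are left-justified, row lengths weakly decrease from top to bottom, and every column is nonempty. Rows of length zero are allowed. A permutation tableau $T$ is a filling of the cells of such a diagram with 0's and 1's satisfying two conditions: (i) every column contains at least one 1; (ii) no cell containing 0 has both a 1 above it in its column and a 1 to its left in its row. The length $n$ of $T$ is its number of rows plus its number of columns. Labels. The southeast boundary of the diagram is a lattice path of $n$ unit south/west steps from the top-right corner to the bottom-left corner. Its steps are labeled $1,\ldots,n$ in order. Each row gets the label of its south step (at the right end of the row), and each column gets the label of its west step (at the bottom of the column). Thus $[n]$ is partitioned into row labels and column labels. $(i,j)$ denotes the cell in the row labeled $i$ and the column labeled $j$. Zeros, ones and rows. A 1 is topmost if there is no 1 above it in its column. A 0 is restricted if there is a 1 above it in its column. A rightmost restricted 0 is a restricted 0 with no restricted 0 to its right in its row. A row is unrestricted if it contains no restricted 0; empty rows are unrestricted. Alternative representation and dots. Put a black dot on each topmost 1; there is exactly one per column. Put a white dot on each rightmost restricted 0; there is exactly one in each restricted row. A black dot is labeled by its column label, and a white dot by its row label. Alternating paths. The alternating path from a dot is a sequence of dots, identified with the sequence of their labels, built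 as follows. - From a white dot in cell $(i,j)$, the next dot is the black dot of column $j$. - From a black dot in cell $(i,j)$: if row $i$ is unrestricted, the path ends; otherwise the next dot is the white dot of row $i$. Every path therefore ends at a black dot in an unrestricted row. - If $k$ is a column label or the label of a restricted row, $P_k$ is the alternating path starting at the dot labeled $k$. - If $r$ is the label of an unrestricted row, $P_r$ is the empty path. We say $P_k$ is contained in a path $P$ if $k$ is the label of a dot of $P$; then $P_k$ is a final segment of $P$. An empty path $P_r$ is contained in no path. Order on paths. Let $a\neq b$ be labels such that neither of $P_a,P_b$ is contained in the other. Remove from $P_a$ and $P_b$ their longest common final segment (nothing is removed if they share no dot), obtaining $P'_a$ and $P'_b$. The ending position of $P'_a$ is defined as follows: - if $P'_a$ is nonempty, it is the cell of its last dot; - if $P_a$ is the empty path of an unrestricted row $r$, it is a point at the right end of row $r$, strictly to the right of all cells of that row. Define $P_a>P_b$ if the ending position of $P'_a$ lies in a row strictly below that of $P'_b$, or lies in the same row and strictly to the right. Otherwise $P_a<P_b$. Inversions. An inversion of $T$ is a pair $(j,k)$ of labels satisfying all of the following: $j$ is a column label; $j<k$; $k$ is not the label of a dot of $P_j$; and $P_j>P_k$. $\mathrm{inv}(T)$ is the number of inversions of $T$. The bijection $\xi$ (Corteel–Nadeau). Start with the labels of the unrestricted rows written in increasing order. Then process the column labels of $T$ in decreasing order. For a column $j$: 1. If its black dot is in cell $(i,j)$, insert $j$ immediately to the left of $i$. 2. If column $j$ contains white dots in rows $i_1<\cdots<i_k$, insert $i_1i_2\cdots i_k$, in this increasing order,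 immediately to the left of $j$. The final word is the permutation $\xi(T)$ of $[n]$. Dashed patterns. For a permutation $\sigma=\sigma_1\cdots\sigma_n$: - $f_{32\text{--}1}(\sigma)$ is the number of pairs $(a,b)$ with $a+1<b$ and $\sigma_a>\sigma_{a+1}>\sigma_b$; - $f_{3\text{--}21}(\sigma)$ is the number of pairs $(a,b)$ with $a<b<n$ and $\sigma_a>\sigma_b>\sigma_{b+1}$. *)

theory Defs
  imports Main
begin

text \<open>The southeast boundary steps are labelled 1..n; R is the set of row labels
  (south steps), the column labels are {1..n} - R.  Rows go from top to bottom in
  increasing label order, columns from right to left in increasing label order
  (so "above" = smaller row label, "to the left" = larger column label).
  The filling is f :: nat => nat => bool (True = 1), only its values on cells matter.\<close>

definition cols :: "nat \<Rightarrow> nat set \<Rightarrow> nat set" where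
  "cols n R = {1..n} - R"

definition is_cell :: "nat \<Rightarrow> nat set \<Rightarrow> nat \<Rightarrow> nat \<Rightarrow> bool" where
  "is_cell n R i j \<longleftrightarrow> i \<in> R \<and> j \<in> cols n R \<and> i < j"

definition perm_tableau :: "nat \<Rightarrow> nat set \<Rightarrow> (nat \<Rightarrow> nat \<Rightarrow> bool) \<Rightarrow> bool" where
  "perm_tableau n R f \<longleftrightarrow>
     R \<subseteq> {1..n} \<and>
     \<comment> \<open>Ferrers diagram: every column is nonempty\<close>
     (\<forall>j \<in> cols n R. \<exists>i. is_cell n R i j) \<and>
     \<comment> \<open>(i) every column contains a 1\<close>
     (\<forall>j \<in> cols n R. \<exists>i. is_cell n R i j \<and> f i j) \<and>
     \<comment> \<open>(ii) no 0 with a 1 above it and a 1 to its left\<close>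
     (\<forall>i j. is_cell n R i j \<and> \<not> f i j \<longrightarrow>
        \<not> ((\<exists>i'. is_cell n R i' j \<and> i' < i \<and> f i' j) \<and>
           (\<exists>j'. is_cell n R i j' \<and> j < j' \<and> f i j')))"

text \<open>Row of the topmost 1 (black dot) of column j.\<close>
definition top1 :: "nat \<Rightarrow> nat set \<Rightarrow> (nat \<Rightarrow> nat \<Rightarrow> bool) \<Rightarrow> nat \<Rightarrow> nat" where
  "top1 n R f j = Min {i. is_cell n R i j \<and> f i j}"

definition restricted0 :: "nat \<Rightarrow> nat set \<Rightarrow> (nat \<Rightarrow> nat \<Rightarrow> bool) \<Rightarrow> nat \<Rightarrow> nat \<Rightarrow> bool" where
  "restricted0 n R f i j \<longleftrightarrow> is_cell n R i j \<and> \<not> f i j \<and>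
      (\<exists>i'. is_cell n R i' j \<and> i' < i \<and> f i' j)"

definition restricted_row :: "nat \<Rightarrow> nat set \<Rightarrow> (nat \<Rightarrow> nat \<Rightarrow> bool) \<Rightarrow> nat \<Rightarrow> bool" where
  "restricted_row n R f i \<longleftrightarrow> i \<in> R \<and> (\<exists>j. restricted0 n R f i j)"

definition unrestricted_row :: "nat \<Rightarrow> nat set \<Rightarrow> (nat \<Rightarrow> nat \<Rightarrow> bool) \<Rightarrow> nat \<Rightarrow> bool" where
  "unrestricted_row n R f i \<longleftrightarrow> i \<in> R \<and> \<not> (\<exists>j. restricted0 n R f i j)"

text \<open>Column of the rightmost restricted 0 (white dot) of a restricted row i
  (rightmost = smallest column label).\<close>
definition white_col :: "nat \<Rightarrow> nat set \<Rightarrow> (nat \<Rightarrow> nat \<Rightarrow> bool) \<Rightarrow> nat \<Rightarrow> nat" where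
  "white_col n R f i = Min {j. restricted0 n R f i j}"

text \<open>Successor of a dot (identified with its label) on an alternating path.\<close>
definition next_dot :: "nat \<Rightarrow> nat set \<Rightarrow> (nat \<Rightarrow> nat \<Rightarrow> bool) \<Rightarrow> nat \<Rightarrow> nat option" where
  "next_dot n R f k =
     (if k \<in> R then Some (white_col n R f k)
      else if restricted_row n R f (top1 n R f k) then Some (top1 n R f k) else None)"

text \<open>Iterate a partial successor function with fuel; the alternating path has
  at most n dots (distinct labels), so fuel n never truncates it.\<close>
fun iter_path :: "(nat \<Rightarrow> nat option) \<Rightarrow> nat \<Rightarrow> nat \<Rightarrow> nat list" where
  "iter_path nx 0 k = [k]"
| "iter_path nx (Suc m) k = k # (case nx k of None \<Rightarrow> [] | Some k' \<Rightarrow> iter_path nx m k')"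

definition alt_path :: "nat \<Rightarrow> nat set \<Rightarrow> (nat \<Rightarrow> nat \<Rightarrow> bool) \<Rightarrow> nat \<Rightarrow> nat list" where
  "alt_path n R f k =
     (if unrestricted_row n R f k then [] else iter_path (next_dot n R f) n k)"

text \<open>Position (row label, column label) of the dot labelled k; for an unrestricted
  row r this is the point (r, 0), strictly right of all cells of row r
  (all cells of row r have column label > r > 0).\<close>
definition dot_pos :: "nat \<Rightarrow> nat set \<Rightarrow> (nat \<Rightarrow> nat \<Rightarrow> bool) \<Rightarrow> nat \<Rightarrow> nat \<times> nat" where
  "dot_pos n R f k =
     (if k \<in> R then (if restricted_row n R f k then (k, white_col n R f k) else (k, 0))
      else (top1 n R f k, k))"

fun common_suffix_len :: "'a list \<Rightarrow> 'a list \<Rightarrow> nat" where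
  "common_suffix_len xs ys =
     (if xs \<noteq> [] \<and> ys \<noteq> [] \<and> last xs = last ys
      then Suc (common_suffix_len (butlast xs) (butlast ys)) else 0)"

text \<open>Ending position of P'_a, where P'_a is P_a with the longest common final
  segment of P_a and P_b removed.\<close>
definition end_pos :: "nat \<Rightarrow> nat set \<Rightarrow> (nat \<Rightarrow> nat \<Rightarrow> bool) \<Rightarrow> nat \<Rightarrow> nat \<Rightarrow> nat \<times> nat" where
  "end_pos n R f a b =
     (let pa = alt_path n R f a; pb = alt_path n R f b;
          pa' = take (length pa - common_suffix_len pa pb) pa
      in if pa' = [] then dot_pos n R f a else dot_pos n R f (last pa'))"

text \<open>P_a > P_b: ending position of P'_a strictly lower, or same row and strictly
  to the right (= smaller column coordinate).\<close>
definition path_gt :: "nat \<Rightarrow> nat set \<Rightarrow> (nat \<Rightarrow> nat \<Rightarrow> bool) \<Rightarrow> nat \<Rightarrow> nat \<Rightarrow> bool" where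
  "path_gt n R f a b =
     (let ea = end_pos n R f a b; eb = end_pos n R f b a
      in fst ea > fst eb \<or> (fst ea = fst eb \<and> snd ea < snd eb))"

definition tab_inv :: "nat \<Rightarrow> nat set \<Rightarrow> (nat \<Rightarrow> nat \<Rightarrow> bool) \<Rightarrow> nat" where
  "tab_inv n R f = card {(j, k). j \<in> cols n R \<and> j < k \<and> k \<le> n \<and>
       k \<notin> set (alt_path n R f j) \<and> path_gt n R f j k}"

definition ins_left :: "nat list \<Rightarrow> nat \<Rightarrow> nat list \<Rightarrow> nat list" where
  "ins_left xs y w = concat (map (\<lambda>z. if z = y then xs @ [z] else [z]) w)"

definition xi_step :: "nat \<Rightarrow> nat set \<Rightarrow> (nat \<Rightarrow> nat \<Rightarrow> bool) \<Rightarrow> nat \<Rightarrow> nat list \<Rightarrow> nat list" where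
  "xi_step n R f j w =
     ins_left (sorted_list_of_set {i. restricted_row n R f i \<and> white_col n R f i = j}) j
       (ins_left [j] (top1 n R f j) w)"

definition xi :: "nat \<Rightarrow> nat set \<Rightarrow> (nat \<Rightarrow> nat \<Rightarrow> bool) \<Rightarrow> nat list" where
  "xi n R f = fold (xi_step n R f) (rev (sorted_list_of_set (cols n R)))
                (sorted_list_of_set {i. unrestricted_row n R f i})"

text \<open>Dashed patterns (lists indexed from 0; sigma_a = sigma ! (a-1)).\<close>
definition f32_1 :: "nat list \<Rightarrow> nat" where
  "f32_1 s = card {(a, b). a + 1 < b \<and> b < length s \<and> s ! a > s ! (a + 1) \<and> s ! (a + 1) > s ! b}"

definition f3_21 :: "nat list \<Rightarrow> nat" where
  "f3_21 s = card {(a, b). a < b \<and> b + 1 < length s \<and> s ! a > s ! b \<and> s ! b > s ! (b + 1)}"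

definition rev_compl :: "nat \<Rightarrow> nat list \<Rightarrow> nat list" where
  "rev_compl n s = map (\<lambda>x. n + 1 - x) (rev s)"

end

theory Submission
  imports Defs
begin

declare common_suffix_len.simps[simp del]

fun lless :: "nat list \<Rightarrow> nat list \<Rightarrow> bool" where
  "lless [] ys = (ys \<noteq> [])"
| "lless (x#xs) [] = False"
| "lless (x#xs) (y#ys) = (x < y \<or> (x = y \<and> lless xs ys))"

lemma lless_irrefl: "\<not> lless xs xs"
  by (induction xs) auto

lemma lless_trans: "lless xs ys \<Longrightarrow> lless ys zs \<Longrightarrow> lless xs zs"
proof (induction xs arbitrary: ys zs)
  case Nil then show ?case by (cases ys; cases zs) auto
next
  case (Cons x xs) then show ?case
    by (cases ys; cases zs) auto
qed

lemma lless_asym: "lless xs ys \<Longrightarrow> \<not> lless ys xs"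
  using lless_irrefl lless_trans by blast

lemma lless_total: "xs \<noteq> ys \<Longrightarrow> lless xs ys \<or> lless ys xs"
proof (induction xs arbitrary: ys)
  case Nil then show ?case by (cases ys) auto
next
  case (Cons x xs) then show ?case by (cases ys) auto
qed

lemma lless_append_same[simp]: "lless (P @ xs) (P @ ys) = lless xs ys"
  by (induction P) auto

lemma lless_split_left:
  "lless xs (P @ ys) \<Longrightarrow> (\<exists>u. xs = P @ u \<and> lless u ys) \<or> (\<forall>zs. lless xs (P @ zs))"
proof (induction P arbitrary: xs)
  case Nil then show ?case by auto
next
  case (Cons p P)
  show ?case
  proof (cases xs)
    case Nil then show ?thesis by auto
  next
    case (Cons x xs')
    with Cons.prems have "x < p \<or> (x = p \<and> lless xs' (P @ ys))" by auto
    then show ?thesis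
    proof
      assume "x < p" then show ?thesis using Cons by auto
    next
      assume h: "x = p \<and> lless xs' (P @ ys)"
      from Cons.IH[of xs'] h show ?thesis using \<open>xs = x # xs'\<close> by auto
    qed
  qed
qed

lemma lless_split_right:
  "lless (P @ ys) xs \<Longrightarrow> (\<exists>u. xs = P @ u \<and> lless ys u) \<or> (\<forall>zs. lless (P @ zs) xs)"
proof (induction P arbitrary: xs)
  case Nil then show ?case by auto
next
  case (Cons p P)
  show ?case
  proof (cases xs)
    case Nil then show ?thesis using Cons.prems by auto
  next
    case (Cons x xs')
    with Cons.prems have "p < x \<or> (x = p \<and> lless (P @ ys) xs')" by auto
    then show ?thesis
    proof
      assume "p < x" then show ?thesis using Cons by auto
    next
      assume h: "x = p \<and> lless (P @ ys) xs'"
      from Cons.IH[of xs'] h show ?thesis using \<open>xs = x # xs'\<close> by auto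
    qed
  qed
qed

lemma ins_left_noy: "y \<notin> set A \<Longrightarrow> concat (map (\<lambda>z. if z = y then xs @ [z] else [z]) A) = A"
  by (induction A) auto

lemma ins_left_split:
  assumes "y \<notin> set A" "y \<notin> set B"
  shows "ins_left xs y (A @ y # B) = A @ xs @ y # B"
  unfolding ins_left_def using ins_left_noy[OF assms(1), of xs] ins_left_noy[OF assms(2), of xs]
  by simp

lemma iter_len:
  "length (iter_path nx m x) \<le> Suc m \<and>
   (length (iter_path nx m x) < Suc m \<longrightarrow> (\<forall>m'\<ge>m. iter_path nx m' x = iter_path nx m x))"
proof (induction m arbitrary: x)
  case 0 then show ?case by simp
next
  case (Suc m)
  show ?case
  proof (cases "nx x")
    case None
    have "iter_path nx m' x = [x]" if mm: "m' \<ge> Suc m" for m'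
      proof -
      obtain k where "m' = Suc k" using mm by (cases m') auto
      then show ?thesis using None by simp
    qed
    then show ?thesis using None by simp
  next
    case (Some y)
    have e: "iter_path nx m' x = x # iter_path nx (m' - 1) y" if mm: "m' \<ge> Suc m" for m'
      proof -
      obtain k where "m' = Suc k" using mm by (cases m') auto
      then show ?thesis using Some by simp
    qed
    have ih1: "length (iter_path nx m y) \<le> Suc m"
      using Suc.IH[of y] by blast
    have ih2: "iter_path nx m' y = iter_path nx m y" if h1: "length (iter_path nx m y) < Suc m" and h2: "m' \<ge> m" for m'
      using Suc.IH[of y] h1 h2 by blast
    show ?thesis
    proof (intro conjI impI allI)
      show "length (iter_path nx (Suc m) x) \<le> Suc (Suc m)" using Some ih1 by simp
      fix m' assume "length (iter_path nx (Suc m) x) < Suc (Suc m)" "Suc m \<le> m'"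
      then show "iter_path nx m' x = iter_path nx (Suc m) x"
        using e[of m'] Some ih2[of "m' - 1"] by simp
    qed
  qed
qed

lemma f32_rc:
  fixes s :: "nat list"
  assumes v: "\<forall>x\<in>set s. x \<le> n"
  shows "f32_1 (rev_compl n s) = f3_21 s"
proof -
  let ?L = "length s"
  let ?s' = "rev_compl n s"
  have len: "length ?s' = ?L" by (simp add: rev_compl_def)
  have nth': "?s' ! i = n + 1 - s ! (?L - Suc i)" if "i < ?L" for i
    using that by (simp add: rev_compl_def rev_nth)
  have sv: "s ! i \<le> n" if "i < ?L" for i using v that by simp
  define X' where "X' = {(a, b). a + 1 < b \<and> b < length ?s' \<and> ?s' ! a > ?s' ! (a + 1) \<and> ?s' ! (a + 1) > ?s' ! b}"
  define X where "X = {(a, b). a < b \<and> b + 1 < length s \<and> s ! a > s ! b \<and> s ! b > s ! (b + 1)}"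
  define phi where "phi = (\<lambda>(a::nat, b::nat). (?L - 1 - b, ?L - 2 - a))"
  define psi where "psi = (\<lambda>(a::nat, b::nat). (?L - 2 - b, ?L - 1 - a))"
  have X'c: "(a, b) \<in> X' \<longleftrightarrow> a + 1 < b \<and> b < ?L \<and> s ! (?L - 2 - a) > s ! (?L - 1 - a) \<and> s ! (?L - 1 - b) > s ! (?L - 2 - a)" for a b
  proof -
    have "(a, b) \<in> X' \<longleftrightarrow> a + 1 < b \<and> b < ?L \<and> ?s' ! a > ?s' ! (a + 1) \<and> ?s' ! (a + 1) > ?s' ! b"
      by (simp add: X'_def len)
    also have "\<dots> \<longleftrightarrow> a + 1 < b \<and> b < ?L \<and> s ! (?L - 2 - a) > s ! (?L - 1 - a) \<and> s ! (?L - 1 - b) > s ! (?L - 2 - a)"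
    proof (cases "a + 1 < b \<and> b < ?L")
      case True
      have e1: "?s' ! a = n + 1 - s ! (?L - 1 - a)" using nth'[of a] True by simp
      have e2: "?s' ! (a+1) = n + 1 - s ! (?L - 2 - a)" using nth'[of "a+1"] True by (simp add: numeral_2_eq_2)
      have e3: "?s' ! b = n + 1 - s ! (?L - 1 - b)" using nth'[of b] True by simp
      have b1: "s ! (?L - 1 - a) \<le> n" "s ! (?L - 2 - a) \<le> n" "s ! (?L - 1 - b) \<le> n" using sv True by auto
      have g: "\<And>x y. x \<le> n \<Longrightarrow> y \<le> n \<Longrightarrow> (n + 1 - x < n + 1 - y) = (y < x)" by auto
      show ?thesis using True unfolding e1 e2 e3 g[OF b1(2) b1(1)] g[OF b1(3) b1(2)] by blast
    qed auto
    finally show ?thesis .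
  qed
  have bij: "bij_betw phi X' X"
  proof (rule bij_betw_byWitness[where f'=psi])
    show "\<forall>a\<in>X'. psi (phi a) = a" unfolding phi_def psi_def using X'c by auto
    show "\<forall>a\<in>X. phi (psi a) = a" unfolding phi_def psi_def X_def by auto
    show "phi ` X' \<subseteq> X"
    proof
      fix p assume "p \<in> phi ` X'"
      then obtain a b where ab: "(a, b) \<in> X'" "p = phi (a, b)" by auto
      have h: "a + 1 < b" "b < ?L" "s ! (?L - 2 - a) > s ! (?L - 1 - a)" "s ! (?L - 1 - b) > s ! (?L - 2 - a)"
        using ab(1) X'c by auto
      have "?L - 2 - a + 1 = ?L - 1 - a" using h by simp
      then show "p \<in> X" using ab(2) h unfolding phi_def X_def by auto
    qed
    show "psi ` X \<subseteq> X'"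
    proof
      fix p assume "p \<in> psi ` X"
      then obtain a b where ab: "(a, b) \<in> X" "p = psi (a, b)" by auto
      have h: "a < b" "b + 1 < ?L" "s ! a > s ! b" "s ! b > s ! (b + 1)" using ab(1) X_def by auto
      have i1: "?L - 2 - (?L - 2 - b) = b" "?L - 1 - (?L - 2 - b) = b + 1" "?L - 1 - (?L - 1 - a) = a"
        using h by auto
      have "(?L - 2 - b, ?L - 1 - a) \<in> X'" unfolding X'c i1 using h by auto
      then show "p \<in> X'" using ab(2) unfolding psi_def by simp
    qed
  qed
  have "card X' = card X" using bij_betw_same_card[OF bij] .
  then show ?thesis unfolding f32_1_def f3_21_def X'_def X_def by simp
qed

locale PT =
  fixes n :: nat and R :: "nat set" and f :: "nat \<Rightarrow> nat \<Rightarrow> bool"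
  assumes pt: "perm_tableau n R f"
begin

abbreviation "C \<equiv> cols n R"
abbreviation "cell \<equiv> is_cell n R"
abbreviation "tp \<equiv> top1 n R f"
abbreviation "wc \<equiv> white_col n R f"
abbreviation "rr \<equiv> restricted_row n R f"
abbreviation "ur \<equiv> unrestricted_row n R f"
abbreviation "r0 \<equiv> restricted0 n R f"
abbreviation "nx \<equiv> next_dot n R f"
abbreviation "AP \<equiv> alt_path n R f"

lemma R_sub: "R \<subseteq> {1..n}"
  using pt by (simp add: perm_tableau_def)

lemma C_iff: "x \<in> C \<longleftrightarrow> x \<in> {1..n} \<and> x \<notin> R"
  by (simp add: cols_def)

lemma cellD: "cell i j \<Longrightarrow> i \<in> R \<and> j \<in> C \<and> i < j"
  by (simp add: is_cell_def)

lemma cond2: "cell i j \<Longrightarrow> \<not> f i j \<Longrightarrow> cell i' j \<Longrightarrow> i' < i \<Longrightarrow> f i' j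
   \<Longrightarrow> cell i j' \<Longrightarrow> j < j' \<Longrightarrow> \<not> f i j'"
  using pt unfolding perm_tableau_def by blast

lemma top_props:
  assumes "j \<in> C"
  shows "cell (tp j) j" "f (tp j) j" "\<And>i. cell i j \<Longrightarrow> f i j \<Longrightarrow> tp j \<le> i"
proof -
  let ?S = "{i. cell i j \<and> f i j}"
  have fin: "finite ?S" by (rule finite_subset[of _ "{..<j}"]) (auto simp: is_cell_def)
  have ne: "?S \<noteq> {}" using pt assms unfolding perm_tableau_def by blast
  have "tp j \<in> ?S" unfolding top1_def using Min_in[OF fin ne] .
  then show "cell (tp j) j" "f (tp j) j" by auto
  show "\<And>i. cell i j \<Longrightarrow> f i j \<Longrightarrow> tp j \<le> i" unfolding top1_def using fin by (simp add: Min_le)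
qed

lemma top_lt: "j \<in> C \<Longrightarrow> tp j < j \<and> tp j \<in> R"
  using top_props(1) cellD by blast

lemma wc_props:
  assumes "rr i"
  shows "r0 i (wc i)" "\<And>j. r0 i j \<Longrightarrow> wc i \<le> j"
proof -
  let ?S = "{j. r0 i j}"
  have fin: "finite ?S" by (rule finite_subset[of _ "{..n}"]) (auto simp: restricted0_def is_cell_def cols_def)
  have ne: "?S \<noteq> {}" using assms by (auto simp: restricted_row_def)
  show "r0 i (wc i)" unfolding white_col_def using Min_in[OF fin ne] by simp
  show "\<And>j. r0 i j \<Longrightarrow> wc i \<le> j" unfolding white_col_def using fin by (simp add: Min_le)
qed

lemma wc_facts: "rr i \<Longrightarrow> wc i \<in> C \<and> i < wc i \<and> i \<in> R \<and> tp (wc i) < i"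
proof -
  assume a: "rr i"
  have r: "r0 i (wc i)" using wc_props(1)[OF a] .
  then obtain i' where i': "cell i' (wc i)" "i' < i" "f i' (wc i)" by (auto simp: restricted0_def)
  have "wc i \<in> C" using r by (auto simp: restricted0_def is_cell_def)
  moreover have "tp (wc i) \<le> i'" using top_props(3)[OF \<open>wc i \<in> C\<close> i'(1) i'(3)] .
  ultimately show ?thesis using r i' by (auto simp: restricted0_def is_cell_def)
qed

lemma r0_top: "r0 g j \<Longrightarrow> tp j < g"
proof -
  assume r: "r0 g j"
  then obtain i' where i': "cell i' j" "i' < g" "f i' j" by (auto simp: restricted0_def)
  have "j \<in> C" using r by (auto simp: restricted0_def is_cell_def)
  then show ?thesis using top_props(3)[OF _ i'(1) i'(3)] i'(2) by simp
qed

lemma F4: assumes "j \<in> C" "rr (tp j)" shows "j < wc (tp j)"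
proof -
  let ?t = "tp j"
  have r: "r0 ?t (wc ?t)" using wc_props(1)[OF assms(2)] .
  then obtain i' where i': "cell i' (wc ?t)" "i' < ?t" "f i' (wc ?t)" and c: "cell ?t (wc ?t)" "\<not> f ?t (wc ?t)"
    by (auto simp: restricted0_def)
  have "j \<noteq> wc ?t" using c(2) top_props(2)[OF assms(1)] by auto
  moreover have "\<not> wc ?t < j"
    using cond2[OF c i'(1) i'(2) i'(3) top_props(1)[OF assms(1)]] top_props(2)[OF assms(1)] by blast
  ultimately show ?thesis by simp
qed

lemma rows_dich: "i \<in> R \<Longrightarrow> rr i \<or> ur i"
  by (auto simp: restricted_row_def unrestricted_row_def)

lemma ur_not_rr: "ur i \<Longrightarrow> \<not> rr i"
  by (auto simp: restricted_row_def unrestricted_row_def)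

lemma ur_R: "ur i \<Longrightarrow> i \<in> R" by (simp add: unrestricted_row_def)
lemma rr_R: "rr i \<Longrightarrow> i \<in> R" by (simp add: restricted_row_def)

end

lemma sorted_dec_distinct: "sorted_wrt (\<lambda>a b. (g::'a\<Rightarrow>nat) b < g a) xs \<Longrightarrow> distinct xs"
  by (induction xs) auto

context PT begin

definition Dm :: "nat \<Rightarrow> bool" where "Dm x \<longleftrightarrow> x \<in> C \<or> rr x"
definition par :: "nat \<Rightarrow> nat" where "par x = (if x \<in> R then wc x else tp x)"
definition mu :: "nat \<Rightarrow> nat" where "mu x = (if x \<in> R then 2*x else 2 * tp x + 1)"
definition good :: "nat \<Rightarrow> bool" where "good x \<longleftrightarrow> Dm x \<or> ur x"

lemma Dm_range: "Dm x \<Longrightarrow> x \<in> {1..n}"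
  using R_sub by (auto simp: Dm_def cols_def restricted_row_def)

lemma good_range: "good x \<Longrightarrow> x \<in> {1..n}"
  using R_sub Dm_range by (auto simp: good_def unrestricted_row_def)

lemma Dm_not_ur: "Dm x \<Longrightarrow> \<not> ur x"
  by (auto simp: Dm_def cols_def unrestricted_row_def restricted_row_def)

lemma C_not_R: "x \<in> C \<Longrightarrow> x \<notin> R" by (simp add: cols_def)

lemma par_good: "Dm x \<Longrightarrow> good (par x) \<and> mu (par x) < mu x"
proof -
  assume d: "Dm x"
  show ?thesis
  proof (cases "x \<in> C")
    case True
    then have "tp x \<in> R" "tp x < x" using top_lt by auto
    then show ?thesis using True rows_dich[of "tp x"] C_not_R[OF True]
      by (auto simp: par_def mu_def good_def Dm_def)
  next
    case False
    then have r: "rr x" "x \<in> R" using d rr_R by (auto simp: Dm_def)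
    then have "wc x \<in> C" "tp (wc x) < x" using wc_facts by auto
    then show ?thesis using r C_not_R[of "wc x"] by (auto simp: par_def mu_def good_def Dm_def)
  qed
qed

lemma nx_Dm: "Dm x \<Longrightarrow> nx x = (if ur (par x) then None else Some (par x))"
proof -
  assume d: "Dm x"
  show ?thesis
  proof (cases "x \<in> C")
    case True
    then have "tp x \<in> R" using top_lt by auto
    then show ?thesis using True C_not_R[OF True] rows_dich[of "tp x"] ur_not_rr
      by (auto simp: next_dot_def par_def)
  next
    case False
    then have r: "rr x" "x \<in> R" using d rr_R by (auto simp: Dm_def)
    then have "wc x \<in> C" using wc_facts by auto
    then show ?thesis using r C_not_R[of "wc x"] by (auto simp: next_dot_def par_def unrestricted_row_def)
  qed
qed

lemma good_ur_Dm: "good y \<Longrightarrow> \<not> ur y \<Longrightarrow> Dm y" by (simp add: good_def)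

lemma nx_step: "Dm x \<Longrightarrow> nx x = Some y \<Longrightarrow> Dm y \<and> mu y < mu x"
  using nx_Dm par_good good_ur_Dm by (metis option.distinct(1) option.inject)

lemma iter_props: "Dm x \<Longrightarrow> set (iter_path nx m x) \<subseteq> Collect Dm \<and>
   sorted_wrt (\<lambda>a b. mu b < mu a) (iter_path nx m x)"
proof (induction m arbitrary: x)
  case 0 then show ?case by simp
next
  case (Suc m)
  show ?case
  proof (cases "nx x")
    case None then show ?thesis using Suc.prems by simp
  next
    case (Some y)
    have y: "Dm y" "mu y < mu x" using nx_step[OF Suc.prems Some] by auto
    have ih: "set (iter_path nx m y) \<subseteq> Collect Dm" "sorted_wrt (\<lambda>a b. mu b < mu a) (iter_path nx m y)"
      using Suc.IH[OF y(1)] by auto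
    have hd: "iter_path nx m y = y # tl (iter_path nx m y)" by (cases m) auto
    have "\<forall>z\<in>set (iter_path nx m y). mu z < mu x"
    proof
      fix z assume "z \<in> set (iter_path nx m y)"
      then have "z = y \<or> z \<in> set (tl (iter_path nx m y))" using hd by (metis set_ConsD)
      then show "mu z < mu x" using ih(2) y(2) hd
        by (metis less_trans sorted_wrt.simps(2))
    qed
    then show ?thesis using Some Suc.prems ih by simp
  qed
qed

lemma iter_len_n: "Dm x \<Longrightarrow> length (iter_path nx m x) \<le> n"
proof -
  assume d: "Dm x"
  have ip: "set (iter_path nx m x) \<subseteq> Collect Dm" "sorted_wrt (\<lambda>a b. mu b < mu a) (iter_path nx m x)"
    using iter_props[OF d] by auto
  have s: "set (iter_path nx m x) \<subseteq> {1..n}"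
  proof
    fix z assume "z \<in> set (iter_path nx m x)"
    then have "Dm z" using ip(1) by blast
    then show "z \<in> {1..n}" by (rule Dm_range)
  qed
  have "distinct (iter_path nx m x)" using sorted_dec_distinct[OF ip(2)] .
  then have "length (iter_path nx m x) = card (set (iter_path nx m x))" by (simp add: distinct_card)
  also have "\<dots> \<le> card {1..n}" using s by (rule card_mono[rotated]) simp
  finally show ?thesis by simp
qed

lemma iter_stable: "Dm x \<Longrightarrow> m' \<ge> n \<Longrightarrow> iter_path nx m' x = iter_path nx n x"
proof -
  assume d: "Dm x" and m: "m' \<ge> n"
  have "length (iter_path nx n x) < Suc n" using iter_len_n[OF d, of n] by simp
  then show ?thesis using iter_len[of nx n x] m by blast
qed

lemma AP_Dm: "Dm x \<Longrightarrow> AP x = x # (if ur (par x) then [] else AP (par x))"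
proof -
  assume d: "Dm x"
  have n1: "n \<ge> 1" using Dm_range[OF d] by auto
  then obtain k where k: "n = Suc k" by (cases n) auto
  have ap: "AP x = iter_path nx n x" using Dm_not_ur[OF d] by (simp add: alt_path_def)
  have it: "iter_path nx n x = x # (case nx x of None \<Rightarrow> [] | Some y \<Rightarrow> iter_path nx k y)"
    unfolding k by (rule iter_path.simps(2))
  show ?thesis
  proof (cases "ur (par x)")
    case True
    then have "nx x = None" using nx_Dm[OF d] by simp
    then show ?thesis using ap it True by simp
  next
    case False
    have y: "Dm (par x)" using par_good[OF d] False good_ur_Dm by blast
    have nxs: "nx x = Some (par x)" using nx_Dm[OF d] False by simp
    have e1: "iter_path nx n x = x # iter_path nx k (par x)" using it nxs by simp
    have e2: "iter_path nx (Suc n) x = x # iter_path nx n (par x)" using nxs by simp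
    have "iter_path nx (Suc n) x = iter_path nx n x" using iter_stable[OF d, of "Suc n"] by simp
    then have "iter_path nx n (par x) = iter_path nx k (par x)" using e1 e2 by simp
    moreover have "AP (par x) = iter_path nx n (par x)" using Dm_not_ur[OF y] by (simp add: alt_path_def)
    ultimately show ?thesis using ap e1 False by simp
  qed
qed

lemma AP_ur: "ur x \<Longrightarrow> AP x = []" by (simp add: alt_path_def)

definition rl :: "nat \<Rightarrow> nat list" where
  "rl x = (if ur x then [x] else AP x @ [tp (last (AP x))])"

lemma rl_ur: "ur x \<Longrightarrow> rl x = [x]" by (simp add: rl_def)

lemma rl_Dm: "Dm x \<Longrightarrow> rl x = x # rl (par x)"
proof -
  assume d: "Dm x"
  show ?thesis
  proof (cases "ur (par x)")
    case True
    have "x \<notin> R"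
    proof
      assume "x \<in> R" then have "rr x" using d by (auto simp: Dm_def cols_def)
      then have "par x \<in> C" using wc_facts \<open>x \<in> R\<close> by (simp add: par_def)
      then show False using True ur_R C_not_R by blast
    qed
    then show ?thesis using True AP_Dm[OF d] Dm_not_ur[OF d] by (simp add: rl_def rl_ur par_def)
  next
    case False
    have y: "Dm (par x)" using par_good[OF d] False good_ur_Dm by blast
    have "AP (par x) \<noteq> []" using AP_Dm[OF y] by simp
    then show ?thesis using False AP_Dm[OF d] Dm_not_ur[OF d] Dm_not_ur[OF y] by (simp add: rl_def)
  qed
qed

lemma rl_props: "good x \<Longrightarrow> set (rl x) \<subseteq> Collect good \<and> hd (rl x) = x \<and> rl x \<noteq> [] \<and>
   ur (last (rl x)) \<and> (\<forall>xs ys. rl x = xs @ ys \<longrightarrow> ys \<noteq> [] \<longrightarrow> rl (hd ys) = ys \<and> good (hd ys))"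
proof (induction "mu x" arbitrary: x rule: less_induct)
  case less
  show ?case
  proof (cases "ur x")
    case True
    have a: "ys = [x]" if "rl x = xs @ ys" "ys \<noteq> []" for xs ys
      using rl_ur[OF True] that by (cases xs) auto
    have b: "rl (hd ys) = ys \<and> good (hd ys)" if "rl x = xs @ ys" "ys \<noteq> []" for xs ys
      using a[OF that] rl_ur[OF True] less.prems by simp
    show ?thesis using True rl_ur[OF True] less.prems b by simp
  next
    case False
    then have d: "Dm x" using less.prems by (simp add: good_def)
    have p: "good (par x)" "mu (par x) < mu x" using par_good[OF d] by auto
    note ih = less.hyps[OF p(2) p(1)]
    have e: "rl x = x # rl (par x)" using rl_Dm[OF d] .
    have suf: "rl (hd ys) = ys \<and> good (hd ys)" if "rl x = xs @ ys" "ys \<noteq> []" for xs ys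
    proof (cases xs)
      case Nil
      then have ys: "ys = rl x" using that by simp
      have hx: "hd (rl x) = x" using e by simp
      show ?thesis unfolding ys hx using less.prems by simp
    next
      case (Cons a xs')
      then have "rl (par x) = xs' @ ys" using that e by (metis append_Cons list.inject)
      then show ?thesis using ih that by blast
    qed
    show ?thesis using e ih less.prems suf by auto
  qed
qed

lemma rl_step: assumes "good a" "rl a = xs @ c # y # zs" shows "Dm c \<and> par c = y"
proof -
  have h: "rl c = c # y # zs" "good c" using rl_props[OF assms(1)] assms(2) by (metis list.sel(1) list.simps(3))+
  have "\<not> ur c" using h(1) rl_ur by auto
  then have d: "Dm c" using h(2) by (simp add: good_def)
  then have "rl (par c) = y # zs" using rl_Dm h(1) by simp
  then have "par c = y" using rl_props[of "par c"] par_good[OF d] by (metis list.sel(1))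
  then show ?thesis using d by simp
qed

lemma Desc: "good y \<Longrightarrow> x \<in> set (rl y) \<Longrightarrow> x \<in> C \<Longrightarrow> y \<le> x \<and> (rr y \<longrightarrow> wc y \<le> x)"
proof (induction "mu y" arbitrary: y rule: less_induct)
  case less
  show ?case
  proof (cases "ur y")
    case True
    then have "x = y" using less.prems rl_ur by simp
    then show ?thesis using True less.prems ur_R C_not_R by blast
  next
    case False
    then have d: "Dm y" using less.prems by (simp add: good_def)
    have p: "good (par y)" "mu (par y) < mu y" using par_good[OF d] by auto
    show ?thesis
    proof (cases "x = y")
      case True then show ?thesis using less.prems C_not_R rr_R by blast
    next
      case False
      then have xin: "x \<in> set (rl (par y))" using rl_Dm[OF d] less.prems(2) by simp
      note ih = less.hyps[OF p(2) p(1) xin less.prems(3)]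
      show ?thesis
      proof (cases "y \<in> C")
        case True
        then have t: "par y = tp y" using C_not_R by (simp add: par_def)
        have "\<not> ur (tp y)"
        proof
          assume "ur (tp y)" then have "x = tp y" using xin t rl_ur by simp
          then show False using ur_R \<open>ur (tp y)\<close> less.prems(3) C_not_R by blast
        qed
        then have "rr (tp y)" using top_lt[OF True] rows_dich by blast
        then have "y < wc (tp y)" using F4[OF True] by simp
        moreover have "wc (tp y) \<le> x" using ih t \<open>rr (tp y)\<close> by simp
        moreover have "\<not> rr y" using True C_not_R rr_R by blast
        ultimately show ?thesis by simp
      next
        case False
        then have r: "rr y" "y \<in> R" using d rr_R by (auto simp: Dm_def)
        then have "par y = wc y" by (simp add: par_def)
        then show ?thesis using ih r wc_facts[of y] by auto
      qed
    qed
  qed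
qed

end

context PT begin

definition kap :: "nat \<Rightarrow> nat" where "kap x = (if x \<in> R then x else 2*n+1-x)"
definition BIG :: nat where "BIG = 2*n+1"
definition key :: "nat \<Rightarrow> nat list" where "key x = map kap (rev (rl x)) @ [BIG]"

lemma kap_inj: "x \<in> {1..n} \<Longrightarrow> y \<in> {1..n} \<Longrightarrow> kap x = kap y \<Longrightarrow> x = y"
  by (auto simp: kap_def split: if_splits)

lemma kap_lt: "x \<in> {1..n} \<Longrightarrow> kap x < BIG"
  by (auto simp: kap_def BIG_def)

lemma map_kap_inj: "set xs \<subseteq> {1..n} \<Longrightarrow> set ys \<subseteq> {1..n} \<Longrightarrow> map kap xs = map kap ys \<Longrightarrow> xs = ys"
proof (induction xs arbitrary: ys)
  case Nil then show ?case by simp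
next
  case (Cons x xs)
  then obtain y ys' where y: "ys = y # ys'" by (cases ys) auto
  have "x = y" using Cons.prems y kap_inj[of x y] by simp
  moreover have "xs = ys'" using Cons.prems y Cons.IH[of ys'] by simp
  ultimately show ?case using y by simp
qed

lemma rl_range: "good x \<Longrightarrow> set (rl x) \<subseteq> {1..n}"
proof
  fix z assume "good x" "z \<in> set (rl x)"
  then have "good z" using rl_props[of x] by blast
  then show "z \<in> {1..n}" by (rule good_range)
qed

lemma key_less_BIG: "good x \<Longrightarrow> v \<in> set (map kap (rev (rl x))) \<Longrightarrow> v < BIG"
proof -
  assume g: "good x" and v: "v \<in> set (map kap (rev (rl x)))"
  then obtain z where z: "z \<in> set (rl x)" "v = kap z" by auto
  then have "z \<in> {1..n}" using rl_range[OF g] by blast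
  then show ?thesis using z kap_lt by simp
qed

lemma key_noBIG: "good b \<Longrightarrow> key b = P @ BIG # u \<Longrightarrow> u = []"
proof (rule ccontr)
  assume g: "good b" and e: "key b = P @ BIG # u" and u: "u \<noteq> []"
  have "butlast (key b) = map kap (rev (rl b))" by (simp add: key_def)
  moreover have "butlast (key b) = P @ BIG # butlast u" using e u by (simp add: butlast_append)
  ultimately have "BIG \<in> set (map kap (rev (rl b)))" by (metis in_set_conv_decomp)
  then show False using key_less_BIG[OF g] by blast
qed

definition S :: "nat \<Rightarrow> nat set" where
  "S m = {x. ur x} \<union> {c \<in> C. m < c} \<union> {i. rr i \<and> m < wc i}"

definition ok :: "nat \<Rightarrow> nat \<Rightarrow> bool" where
  "ok x y \<longleftrightarrow> (x \<in> R \<longrightarrow> x < y) \<and> (x \<notin> R \<longrightarrow> y < x)"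

definition Inv :: "nat \<Rightarrow> nat list \<Rightarrow> bool" where
  "Inv m W \<longleftrightarrow> distinct W \<and> set W = S m \<and> sorted_wrt (\<lambda>a b. lless (key a) (key b)) W
     \<and> successively ok W \<and> (W \<noteq> [] \<longrightarrow> last W \<in> R)"

lemma S_good: "x \<in> S m \<Longrightarrow> good x"
  by (auto simp: S_def good_def Dm_def)

lemma KB:
  assumes "good b" "lless (P @ [BIG]) (key b)"
  shows "lless (P @ zs) (key b)"
proof -
  from lless_split_right[OF assms(2)]
  show ?thesis
  proof
    assume "\<exists>u. key b = P @ u \<and> lless [BIG] u"
    then obtain u where u: "key b = P @ u" "lless [BIG] u" by blast
    then obtain v u' where vu: "u = v # u'" by (cases u) auto
    from u(2) vu have "BIG < v \<or> (v = BIG \<and> u' \<noteq> [])" by (cases u') auto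
    then show ?thesis
    proof
      assume "BIG < v"
      moreover have "v \<in> set (key b)" using u vu by simp
      then have "v \<in> set (map kap (rev (rl b))) \<or> v = BIG" by (auto simp: key_def)
      ultimately show ?thesis using key_less_BIG[OF assms(1), of v] by auto
    next
      assume "v = BIG \<and> u' \<noteq> []"
      then show ?thesis using key_noBIG[OF assms(1)] u vu by blast
    qed
  qed blast
qed

lemma tp_good: "j \<in> C \<Longrightarrow> good (tp j)"
  using top_lt rows_dich by (auto simp: good_def Dm_def)

lemma KA:
  assumes j: "j \<in> C" "j \<le> m" and a: "a \<in> S m" and l: "lless (key a) (P @ [BIG])"
    and P: "P = map kap (rev (rl (tp j)))"
  shows "lless (key a) (P @ kap j # zs)"
proof -
  let ?t = "tp j"
  have gt: "good ?t" using tp_good[OF j(1)] .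
  have ga: "good a" using S_good[OF a] .
  from lless_split_left[OF l]
  show ?thesis
  proof
    assume "\<exists>u. key a = P @ u \<and> lless u [BIG]"
    then obtain u where u: "key a = P @ u" "lless u [BIG]" by blast
    show ?thesis
    proof (cases u)
      case Nil
      then have "key a = P" using u by simp
      then have "BIG \<in> set P" by (metis key_def last_in_set last_snoc snoc_eq_iff_butlast)
      then show ?thesis using key_less_BIG[OF gt] P by blast
    next
      case (Cons v u')
      then have vB: "v < BIG" using u(2) by (cases u') auto
      have u'ne: "u' \<noteq> []"
      proof
        assume "u' = []"
        then have "last (key a) = v" using u Cons by simp
        then show False using vB by (simp add: key_def)
      qed
      have "map kap (rev (rl a)) = butlast (key a)" by (simp add: key_def)
      also have "\<dots> = P @ v # butlast u'" using u(1) Cons u'ne by (simp add: butlast_append)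
      finally have me: "map kap (rev (rl a)) = P @ v # butlast u'" .
      then obtain us vs where uv: "rev (rl a) = us @ vs" "P = map kap us" "v # butlast u' = map kap vs"
        by (auto simp: map_eq_append_conv)
      then obtain c vs' where cv: "vs = c # vs'" "kap c = v" by (cases vs) auto
      have "set us \<subseteq> {1..n}" using rl_range[OF ga] uv(1) by (metis Un_subset_iff set_append set_rev)
      then have us: "us = rev (rl ?t)"
        using map_kap_inj[of us "rev (rl ?t)"] rl_range[OF gt] uv(2) P by simp
      obtain rest where rt: "rl ?t = ?t # rest" using rl_props[OF gt] by (metis list.collapse)
      have "rl a = rev (rev (rl a))" by simp
      also have "\<dots> = rev vs' @ c # rl ?t" using uv(1) us cv by simp
      finally have rla: "rl a = rev vs' @ c # ?t # rest" using rt by simp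
      have cs: "Dm c" "par c = ?t" using rl_step[OF ga rla] by auto
      have tR: "?t \<in> R" using top_lt[OF j(1)] by simp
      have cC: "c \<in> C"
      proof -
        have "\<not> rr c"
        proof
          assume "rr c"
          then have "par c = wc c" "wc c \<in> C" using rr_R wc_facts by (auto simp: par_def)
          then show False using cs tR C_not_R by auto
        qed
        then show ?thesis using cs(1) by (simp add: Dm_def)
      qed
      have cin: "c \<in> set (rl a)" using rla by simp
      have D: "a \<le> c \<and> (rr a \<longrightarrow> wc a \<le> c)" using Desc[OF ga cin cC] .
      have "m < c"
      proof -
        have "ur a \<or> (a \<in> C \<and> m < a) \<or> (rr a \<and> m < wc a)" using a by (auto simp: S_def)
        then show ?thesis
        proof (elim disjE)
          assume "ur a"
          then have "c = a" using cin rl_ur by simp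
          then show ?thesis using \<open>ur a\<close> ur_R cC C_not_R by blast
        next
          assume "a \<in> C \<and> m < a" then show ?thesis using D by simp
        next
          assume "rr a \<and> m < wc a" then show ?thesis using D by simp
        qed
      qed
      then have jc: "j < c" "c \<le> n" using j(2) cC by (auto simp: cols_def)
      have "kap c < kap j" using jc cC j(1) C_not_R by (auto simp: kap_def)
      then have "v < kap j" using cv by simp
      then show ?thesis using u(1) Cons by simp
    qed
  qed blast
qed

end

context PT begin

lemma key_Dm: "Dm x \<Longrightarrow> key x = map kap (rev (rl (par x))) @ [kap x, BIG]"
  using rl_Dm by (simp add: key_def)

lemma step:
  assumes j: "j \<in> C" "j \<le> m" and gap: "\<forall>c\<in>C. j < c \<longrightarrow> m < c" and I: "Inv m W"
  shows "Inv (j - 1) (xi_step n R f j W)"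
proof -
  let ?t = "tp j"
  define G where "G = sorted_list_of_set {i. rr i \<and> wc i = j}"
  define P where "P = map kap (rev (rl ?t))"
  have tR: "?t \<in> R" "?t < j" using top_lt[OF j(1)] by auto
  have gt: "good ?t" using tp_good[OF j(1)] .
  have dj: "Dm j" using j(1) by (simp add: Dm_def)
  have pj: "par j = ?t" using j(1) C_not_R by (simp add: par_def)
  have Idist: "distinct W" and Iset: "set W = S m" and Isort: "sorted_wrt (\<lambda>a b. lless (key a) (key b)) W"
    and Isucc: "successively ok W" and Ilast: "W \<noteq> [] \<longrightarrow> last W \<in> R" using I by (auto simp: Inv_def)
  have finG: "finite {i. rr i \<and> wc i = j}"
    by (rule finite_subset[of _ R]) (auto simp: restricted_row_def intro: finite_subset[OF R_sub])
  have setG: "set G = {i. rr i \<and> wc i = j}" using finG by (simp add: G_def)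
  have sortG: "sorted_wrt (<) G" by (simp add: G_def strict_sorted_list_of_set)
  have distG: "distinct G" by (simp add: G_def)
  have Gfacts: "rr g \<and> g \<in> R \<and> wc g = j \<and> g < j \<and> ?t < g" if "g \<in> set G" for g
  proof -
    have "rr g" "wc g = j" using that setG by auto
    moreover have "g < j" using wc_facts[OF \<open>rr g\<close>] \<open>wc g = j\<close> by simp
    moreover have "?t < g" using r0_top wc_props(1)[OF \<open>rr g\<close>] \<open>wc g = j\<close> by metis
    ultimately show ?thesis using rr_R by auto
  qed
  have tS: "?t \<in> S m"
  proof (cases "ur ?t")
    case True then show ?thesis by (simp add: S_def)
  next
    case False
    then have "rr ?t" using rows_dich tR by blast
    then have "j < wc ?t" "wc ?t \<in> C" using F4[OF j(1)] wc_facts by auto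
    then show ?thesis using gap \<open>rr ?t\<close> by (auto simp: S_def)
  qed
  then have "?t \<in> set W" using Iset by simp
  then obtain A B where W: "W = A @ ?t # B" by (meson split_list)
  have tA: "?t \<notin> set A" and tB: "?t \<notin> set B" using Idist W by auto
  have jS: "j \<notin> S m" using j C_not_R by (auto simp: S_def unrestricted_row_def restricted_row_def)
  have GS: "g \<notin> S m" if "g \<in> set G" for g
  proof -
    have "rr g" "wc g = j" "g \<in> R" using Gfacts[OF that] by auto
    then show ?thesis using j(2) ur_not_rr C_not_R by (auto simp: S_def)
  qed
  have jW: "j \<notin> set W" using jS Iset by simp
  have W1: "ins_left [j] ?t W = A @ j # ?t # B" using ins_left_split[OF tA tB, of "[j]"] W by simp
  have jA: "j \<notin> set A" and jtB: "j \<notin> set (?t # B)" using jW W by auto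
  have W2: "xi_step n R f j W = A @ G @ j # ?t # B"
    unfolding xi_step_def G_def[symmetric] W1 using ins_left_split[OF jA jtB, of G] by simp
  have kt: "key ?t = P @ [BIG]" by (simp add: key_def P_def)
  have kj: "key j = P @ [kap j, BIG]" using key_Dm[OF dj] pj by (simp add: P_def)
  have kg: "key g = P @ [kap j, g, BIG]" if "g \<in> set G" for g
  proof -
    have "Dm g" "par g = j" "g \<in> R" using Gfacts[OF that] by (auto simp: Dm_def par_def)
    then show ?thesis using rl_Dm[OF \<open>Dm g\<close>] rl_Dm[OF dj] pj by (simp add: key_def P_def kap_def)
  qed
  have Aless: "lless (key a) (key ?t)" if "a \<in> set A" for a
    using Isort W that by (auto simp: sorted_wrt_append)
  have Bless: "lless (key ?t) (key b)" if "b \<in> set B" for b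
    using Isort W that by (auto simp: sorted_wrt_append)
  have AS: "a \<in> S m" if "a \<in> set A" for a using that W Iset by auto
  have BS: "b \<in> S m" if "b \<in> set B" for b using that W Iset by auto
  have A1: "lless (key a) (P @ kap j # zs)" if "a \<in> set A" for a zs
    using KA[OF j AS[OF that] _ P_def] Aless[OF that] kt by simp
  have B1: "lless (P @ zs) (key b)" if "b \<in> set B" for b zs
    using KB[OF S_good[OF BS[OF that]]] Bless[OF that] kt by simp
  have sG: "sorted_wrt (\<lambda>a b. lless (key a) (key b)) G"
  proof (rule sorted_wrt_mono_rel[OF _ sortG])
    fix x y assume "x \<in> set G" "y \<in> set G" "x < y"
    then show "lless (key x) (key y)" using kg by simp
  qed
  have sA: "sorted_wrt (\<lambda>a b. lless (key a) (key b)) A" and sB: "sorted_wrt (\<lambda>a b. lless (key a) (key b)) (?t # B)"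
    using Isort W by (auto simp: sorted_wrt_append)
  have sjtB: "sorted_wrt (\<lambda>a b. lless (key a) (key b)) (j # ?t # B)"
    using sB kj kt B1 kap_lt[of j] j(1) by (simp add: cols_def)
  have sGj: "sorted_wrt (\<lambda>a b. lless (key a) (key b)) (G @ j # ?t # B)"
  proof -
    have gB: "g < BIG" if "g \<in> set G" for g using Gfacts[OF that] j(1) by (auto simp: BIG_def cols_def)
    show ?thesis unfolding sorted_wrt_append using sG sjtB kg kj kt B1 gB by auto
  qed
  have sAll: "sorted_wrt (\<lambda>a b. lless (key a) (key b)) (A @ G @ j # ?t # B)"
  proof -
    have AB: "lless (key a) (key b)" if "a \<in> set A" "b \<in> set B" for a b
      using Isort W that by (auto simp: sorted_wrt_append)
    show ?thesis
      unfolding sorted_wrt_append[of _ A] using sA sGj A1 kg kj Aless AB by (auto simp del: sorted_wrt.simps)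
  qed
  have sucA: "successively ok A" and sucB: "successively ok (?t # B)"
    and lastA: "A \<noteq> [] \<Longrightarrow> ok (last A) ?t" using Isucc W by (auto simp: successively_append_iff)
  have okjt: "ok j ?t" using tR j(1) C_not_R by (simp add: ok_def)
  have sucG: "successively ok G"
  proof -
    have "sorted_wrt ok G" by (rule sorted_wrt_mono_rel[OF _ sortG]) (use Gfacts in \<open>auto simp: ok_def\<close>)
    then show ?thesis by (rule successively_if_sorted_wrt)
  qed
  have sucGj: "successively ok (G @ j # ?t # B)"
    using sucG sucB okjt Gfacts[of "last G"] by (auto simp: successively_append_iff ok_def)
  have hdok: "ok (last A) (hd (G @ j # ?t # B))" if "A \<noteq> []"
  proof -
    let ?z = "last A"
    have zS: "?z \<in> S m" using AS that by simp
    have ozt: "ok ?z ?t" using lastA[OF that] .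
    have hG: "hd (G @ j # ?t # B) = j \<or> hd (G @ j # ?t # B) \<in> set G" by (cases G) auto
    show ?thesis
    proof (cases "?z \<in> R")
      case True
      then have "?z < ?t" using ozt by (simp add: ok_def)
      moreover have "?t < hd (G @ j # ?t # B)"
        using hG Gfacts[of "hd (G @ j # ?t # B)"] tR by auto
      ultimately show ?thesis using True by (simp add: ok_def)
    next
      case False
      then have "?z \<in> C" "m < ?z" using zS by (auto simp: S_def unrestricted_row_def restricted_row_def)
      then show ?thesis using hG Gfacts False j(2) by (fastforce simp: ok_def)
    qed
  qed
  have sucAll: "successively ok (A @ G @ j # ?t # B)"
    using sucA sucGj hdok by (auto simp: successively_append_iff)
  have setNew: "set (A @ G @ j # ?t # B) = S (j - 1)"
  proof -
    have "set (A @ G @ j # ?t # B) = S m \<union> {j} \<union> set G" using Iset W by auto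
    also have "\<dots> = S (j - 1)"
    proof -
      have j1: "j \<ge> 1" using j(1) by (simp add: cols_def)
      have e1: "{c \<in> C. j - 1 < c} = {c \<in> C. m < c} \<union> {j}"
      proof (intro set_eqI iffI)
        fix c assume "c \<in> {c \<in> C. j - 1 < c}"
        then have "c \<in> C" "j \<le> c" using j1 by auto
        then show "c \<in> {c \<in> C. m < c} \<union> {j}" using gap by (cases "c = j") auto
      next
        fix c assume "c \<in> {c \<in> C. m < c} \<union> {j}"
        then show "c \<in> {c \<in> C. j - 1 < c}" using j j1 by auto
      qed
      have e2: "{i. rr i \<and> j - 1 < wc i} = {i. rr i \<and> m < wc i} \<union> {i. rr i \<and> wc i = j}"
      proof -
        have "rr i \<Longrightarrow> wc i \<in> C" for i using wc_facts by blast
        then show ?thesis using gap j j1 by fastforce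
      qed
      show ?thesis unfolding S_def e1 e2 setG by auto
    qed
    finally show ?thesis .
  qed
  have distNew: "distinct (A @ G @ j # ?t # B)"
  proof -
    have "distinct (A @ ?t # B)" using Idist W by simp
    moreover have "j \<notin> set G" using Gfacts j(1) C_not_R by blast
    moreover have "set G \<inter> set (A @ ?t # B) = {}" using GS Iset W by auto
    ultimately show ?thesis using distG jW W by auto
  qed
  have lastNew: "last (A @ G @ j # ?t # B) = last W" using W by simp
  have "W \<noteq> []" using W by simp
  then have "last (A @ G @ j # ?t # B) \<in> R" using lastNew Ilast by simp
  then show ?thesis unfolding Inv_def W2 using distNew setNew sAll sucAll by blast
qed

end

context PT begin

lemma fold_inv:
  "sorted_wrt (>) cs \<Longrightarrow> set cs = {c \<in> C. c \<le> m} \<Longrightarrow> Inv m W \<Longrightarrow> Inv 0 (fold (xi_step n R f) cs W)"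
proof (induction cs arbitrary: m W)
  case Nil
  have "S m = S 0"
  proof -
    have nc: "\<And>c. c \<in> C \<Longrightarrow> m < c" using Nil.prems(2) by (metis (mono_tags, lifting) empty_iff empty_set mem_Collect_eq not_le_imp_less)
    have c0: "\<And>c. c \<in> C \<Longrightarrow> 0 < c" by (simp add: cols_def)
    have "\<And>i. rr i \<Longrightarrow> wc i \<in> C" using wc_facts by blast
    then show ?thesis unfolding S_def using nc c0 by blast
  qed
  then show ?case using Nil.prems(3) by (simp add: Inv_def)
next
  case (Cons j cs)
  have jC: "j \<in> C" "j \<le> m" using Cons.prems(2) by auto
  have csj: "\<And>c. c \<in> set cs \<Longrightarrow> c < j" using Cons.prems(1) by simp
  have gap: "\<forall>c\<in>C. j < c \<longrightarrow> m < c"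
  proof (intro ballI impI)
    fix c assume c: "c \<in> C" "j < c"
    show "m < c"
    proof (rule ccontr)
      assume "\<not> m < c"
      then have "c \<in> set (j # cs)" using Cons.prems(2) c by auto
      then have "c \<in> set cs" using c by auto
      then have "c < j" by (rule csj)
      then show False using c by simp
    qed
  qed
  have set': "set cs = {c \<in> C. c \<le> j - 1}"
  proof (intro set_eqI iffI)
    fix c assume c: "c \<in> set cs"
    then have "c < j" "c \<in> C" using csj Cons.prems(2) by auto
    then show "c \<in> {c \<in> C. c \<le> j - 1}" by auto
  next
    fix c assume "c \<in> {c \<in> C. c \<le> j - 1}"
    then have c: "c \<in> C" "c < j" using jC by (auto simp: cols_def)
    then have "c \<in> set (j # cs)" using Cons.prems(2) jC by auto
    then show "c \<in> set cs" using c by auto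
  qed
  have "Inv (j - 1) (xi_step n R f j W)" using step[OF jC gap Cons.prems(3)] .
  then show ?case using Cons.IH[OF _ set'] Cons.prems(1) by simp
qed

lemma S_n: "S n = {x. ur x}"
proof -
  have "\<And>c. c \<in> C \<Longrightarrow> c \<le> n" by (simp add: cols_def)
  moreover have "\<And>i. rr i \<Longrightarrow> wc i \<le> n" using wc_facts by (fastforce simp: cols_def)
  ultimately show ?thesis unfolding S_def by force
qed

lemma S_0: "S 0 = {1..n}"
proof -
  have "{1..n} = R \<union> C" using R_sub by (auto simp: cols_def)
  moreover have "R = {x. ur x} \<union> {i. rr i}" using rows_dich ur_R rr_R by blast
  moreover have "\<And>i. rr i \<Longrightarrow> 0 < wc i" using wc_facts by fastforce
  moreover have "\<And>c. c \<in> C \<Longrightarrow> 0 < c" by (simp add: cols_def)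
  ultimately show ?thesis unfolding S_def by blast
qed

lemma init_inv: "Inv n (sorted_list_of_set {x. ur x})"
proof -
  let ?U = "{x. ur x}"
  have fin: "finite ?U" by (rule finite_subset[OF _ finite_subset[OF R_sub]]) (auto simp: ur_R)
  let ?W = "sorted_list_of_set ?U"
  have sW: "sorted_wrt (<) ?W" by (simp add: strict_sorted_list_of_set)
  have setW: "set ?W = ?U" using fin by simp
  have ku: "key u = [u, BIG]" if "u \<in> set ?W" for u
  proof -
    have "ur u" using that setW by simp
    then show ?thesis using ur_R by (simp add: key_def rl_ur kap_def)
  qed
  have s1: "sorted_wrt (\<lambda>a b. lless (key a) (key b)) ?W"
    by (rule sorted_wrt_mono_rel[OF _ sW]) (simp add: ku)
  have s2: "successively ok ?W"
  proof -
    have "sorted_wrt ok ?W"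
      by (rule sorted_wrt_mono_rel[OF _ sW]) (use setW ur_R in \<open>auto simp: ok_def\<close>)
    then show ?thesis by (rule successively_if_sorted_wrt)
  qed
  have s3: "?W \<noteq> [] \<longrightarrow> last ?W \<in> R"
    using setW ur_R last_in_set by blast
  show ?thesis unfolding Inv_def using s1 s2 s3 setW S_n by simp
qed

lemma xi_inv: "Inv 0 (xi n R f)"
proof -
  have finC: "finite C" by (simp add: cols_def)
  have "sorted_wrt (>) (rev (sorted_list_of_set C))"
    by (simp add: sorted_wrt_rev strict_sorted_list_of_set)
  moreover have "set (rev (sorted_list_of_set C)) = {c \<in> C. c \<le> n}" using finC by (auto simp: cols_def)
  ultimately show ?thesis unfolding xi_def using fold_inv init_inv by blast
qed

end

context PT begin

lemma rl_AP: "Dm x \<Longrightarrow> rl x = AP x @ [last (rl x)] \<and> AP x \<noteq> []"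
proof -
  assume d: "Dm x"
  have "AP x \<noteq> []" using AP_Dm[OF d] by simp
  then show ?thesis using Dm_not_ur[OF d] by (simp add: rl_def)
qed

lemma Dm_iff: "x \<in> {1..n} \<Longrightarrow> \<not> ur x \<Longrightarrow> Dm x"
  using rows_dich by (auto simp: Dm_def cols_def)

lemma last_AP_col:
  assumes d: "Dm x"
  shows "last (AP x) \<in> C \<and> tp (last (AP x)) = last (rl x) \<and> ur (last (rl x)) \<and> Dm (last (AP x))"
proof -
  have e: "rl x = AP x @ [last (rl x)]" and ne: "AP x \<noteq> []" using rl_AP[OF d] by auto
  let ?c = "last (AP x)" and ?r = "last (rl x)"
  have g: "good x" using d by (simp add: good_def)
  have "rl x = butlast (AP x) @ ?c # ?r # []" using e ne by (metis append_Cons append_assoc append_butlast_last_id self_append_conv2)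
  then have cs: "Dm ?c" "par ?c = ?r" using rl_step[OF g] by blast+
  have ur: "ur ?r" using rl_props[OF g] by blast
  have "?c \<notin> R"
  proof
    assume "?c \<in> R"
    then have "rr ?c" using cs(1) by (auto simp: Dm_def cols_def)
    then have "par ?c \<in> C" using wc_facts \<open>?c \<in> R\<close> by (simp add: par_def)
    then show False using cs(2) ur ur_R C_not_R by metis
  qed
  then show ?thesis using cs ur by (auto simp: Dm_def par_def restricted_row_def)
qed

lemma key_rev: "key x = map kap (rev (rl x)) @ [BIG]" by (simp add: key_def)

lemma anc_key:
  assumes j: "j \<in> C" and k: "k \<in> set (AP j)" "k \<noteq> j"
  shows "lless (key j) (key k)"
proof -
  have d: "Dm j" using j by (simp add: Dm_def)
  have g: "good j" using d by (simp add: good_def)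
  obtain r where e: "rl j = AP j @ [r]" using rl_AP[OF d] by blast
  obtain xs ys where A: "AP j = xs @ k # ys" using k(1) by (meson split_list)
  have rj: "rl j = xs @ (k # ys @ [r])" using e A by simp
  then have rk: "rl k = k # ys @ [r]" using rl_props[OF g] by (metis list.distinct(1) list.sel(1))
  have "xs \<noteq> []"
  proof
    assume "xs = []"
    then have "hd (rl j) = k" using rj by simp
    then show False using rl_props[OF g] k(2) by simp
  qed
  then obtain x0 xs' where x0: "rev xs = x0 # xs'" by (cases "rev xs") auto
  have "x0 \<in> set (rl j)" using rj x0 by (metis in_set_conv_decomp list.set_intros(1) set_rev Un_iff set_append)
  then have x0r: "x0 \<in> {1..n}" using rl_range[OF g] by blast
  have kj: "key j = map kap (rev (rl k)) @ (kap x0 # map kap xs' @ [BIG])"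
    using rj rk x0 by (simp add: key_def)
  have kk: "key k = map kap (rev (rl k)) @ [BIG]" by (simp add: key_def)
  show ?thesis unfolding kj kk using kap_lt[OF x0r] by simp
qed

lemma path_gt_unfold:
  "path_gt n R f a b \<longleftrightarrow> (fst (end_pos n R f a b) > fst (end_pos n R f b a) \<or>
     (fst (end_pos n R f a b) = fst (end_pos n R f b a) \<and> snd (end_pos n R f a b) < snd (end_pos n R f b a)))"
  by (simp add: path_gt_def Let_def)

lemma end_pos_unfold:
  "end_pos n R f a b = (if take (length (AP a) - common_suffix_len (AP a) (AP b)) (AP a) = [] then dot_pos n R f a
     else dot_pos n R f (last (take (length (AP a) - common_suffix_len (AP a) (AP b)) (AP a))))"
  by (simp add: end_pos_def Let_def)

lemma dot_pos_col: "c \<in> C \<Longrightarrow> dot_pos n R f c = (tp c, c)"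
  using C_not_R by (simp add: dot_pos_def)

lemma dot_pos_rr: "rr y \<Longrightarrow> dot_pos n R f y = (y, wc y)"
  using rr_R by (simp add: dot_pos_def)

lemma dot_pos_ur: "ur y \<Longrightarrow> dot_pos n R f y = (y, 0)"
  using ur_R ur_not_rr by (simp add: dot_pos_def)

end

lemma csl_sym: "common_suffix_len xs ys = common_suffix_len ys xs"
proof (induction xs ys rule: common_suffix_len.induct)
  case (1 xs ys)
  show ?case
    apply (subst common_suffix_len.simps)
    apply (subst (2) common_suffix_len.simps)
    using 1 by auto
qed

lemma csl_decomp:
  "\<exists>xs' ys' s. xs = xs' @ s \<and> ys = ys' @ s \<and> length s = common_suffix_len xs ys \<and>
     (xs' \<noteq> [] \<and> ys' \<noteq> [] \<longrightarrow> last xs' \<noteq> last ys')"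
proof (induction xs ys rule: common_suffix_len.induct)
  case (1 xs ys)
  show ?case
  proof (cases "xs \<noteq> [] \<and> ys \<noteq> [] \<and> last xs = last ys")
    case True
    then obtain xs' ys' s where h: "butlast xs = xs' @ s" "butlast ys = ys' @ s"
      "length s = common_suffix_len (butlast xs) (butlast ys)"
      "xs' \<noteq> [] \<and> ys' \<noteq> [] \<longrightarrow> last xs' \<noteq> last ys'" using 1 by blast
    have "xs = xs' @ (s @ [last xs])" using h(1) True append_butlast_last_id by fastforce
    moreover have "ys = ys' @ (s @ [last xs])" using h(2) True append_butlast_last_id by fastforce
    moreover have "length (s @ [last xs]) = common_suffix_len xs ys"
      using True h(3) by (subst common_suffix_len.simps) simp
    ultimately show ?thesis using h(4) by blast
  next
    case False
    then show ?thesis by (intro exI[of _ xs] exI[of _ ys] exI[of _ "[]"])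
       (subst common_suffix_len.simps, auto)
  qed
qed


context PT begin

lemma kap_col: "c \<in> C \<Longrightarrow> kap c = 2*n+1-c" using C_not_R by (simp add: kap_def)
lemma kap_row: "c \<in> R \<Longrightarrow> kap c = c" by (simp add: kap_def)

lemma PG:
  assumes j: "j \<in> C" and k: "k \<in> {1..n}" "j < k" and nk: "k \<notin> set (AP j)"
  shows "path_gt n R f j k \<longleftrightarrow> lless (key k) (key j)"
proof -
  have dj: "Dm j" using j by (simp add: Dm_def)
  have gj: "good j" using dj by (simp add: good_def)
  define A where "A = AP j"
  obtain rj where ej: "rl j = A @ [rj]" using rl_AP[OF dj] A_def by blast
  have Ane: "A \<noteq> []" unfolding A_def using rl_AP[OF dj] by (rule conjunct2)
  have lj: "last A \<in> C" "tp (last A) = rj" "ur rj" "Dm (last A)"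
    using last_AP_col[OF dj] ej A_def by auto
  show ?thesis
  proof (cases "ur k")
    case True
    have B: "AP k = []" using AP_ur[OF True] .
    have c0: "common_suffix_len A [] = 0" by (subst common_suffix_len.simps) simp
    have c0': "common_suffix_len [] A = 0" by (subst common_suffix_len.simps) simp
    have e1: "end_pos n R f j k = (rj, last A)"
      using end_pos_unfold[of j k] B c0 Ane dot_pos_col[OF lj(1)] lj(2) A_def by simp
    have e2: "end_pos n R f k j = (k, 0)"
      using end_pos_unfold[of k j] B c0' dot_pos_ur[OF True] A_def by simp
    have lhs: "path_gt n R f j k \<longleftrightarrow> k < rj" using path_gt_unfold[of j k] e1 e2 by auto
    obtain c rest where cr: "rev A = c # rest" using Ane by (cases "rev A") auto
    have cl: "c = last A" using cr by (metis last_rev list.sel(1) rev_rev_ident)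
    have "c \<in> {1..n}" using lj(1) cl by (simp add: cols_def)
    then have kc: "kap c < BIG" by (rule kap_lt)
    have kj: "key j = rj # kap c # map kap rest @ [BIG]"
      using ej cr ur_R[OF lj(3)] by (simp add: key_def kap_row)
    have kk: "key k = [k, BIG]" using ur_R[OF True] by (simp add: key_def rl_ur[OF True] kap_row)
    show ?thesis unfolding lhs kj kk using kc by auto
  next
    case False
    have dk: "Dm k" using Dm_iff[OF k(1) False] .
    have gk: "good k" using dk by (simp add: good_def)
    define B where "B = AP k"
    obtain rk where ek: "rl k = B @ [rk]" using rl_AP[OF dk] B_def by blast
    have Bne: "B \<noteq> []" unfolding B_def using rl_AP[OF dk] by (rule conjunct2)
    have lk: "last B \<in> C" "tp (last B) = rk" "ur rk" "Dm (last B)"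
      using last_AP_col[OF dk] ek B_def by auto
    obtain A' B' s where dec: "A = A' @ s" "B = B' @ s" "length s = common_suffix_len A B"
      "A' \<noteq> [] \<and> B' \<noteq> [] \<longrightarrow> last A' \<noteq> last B'" using csl_decomp[of A B] by blast
    have t1: "take (length A - common_suffix_len A B) A = A'" using dec by simp
    have t2: "take (length B - common_suffix_len B A) B = B'" using dec csl_sym[of B A] by simp
    have A'ne: "A' \<noteq> []"
    proof
      assume "A' = []"
      then have "A = s" using dec(1) by simp
      moreover have "hd A = j" using AP_Dm[OF dj] A_def by simp
      ultimately have "j \<in> set s" using Ane by (metis list.set_sel(1))
      then have "j \<in> set B" using dec(2) by simp
      then have "j \<in> set (rl k)" using ek by simp
      then have "k \<le> j" using Desc[OF gk _ j] by blast
      then show False using k(2) by simp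
    qed
    have B'ne: "B' \<noteq> []"
    proof
      assume "B' = []"
      then have "B = s" using dec(2) by simp
      moreover have "hd B = k" using AP_Dm[OF dk] B_def by simp
      ultimately have "k \<in> set s" using Bne by (metis list.set_sel(1))
      then have "k \<in> set A" using dec(1) by simp
      then show False using nk A_def by simp
    qed
    have e1: "end_pos n R f j k = dot_pos n R f (last A')"
      unfolding end_pos_unfold[of j k] t1[unfolded A_def B_def] using A'ne by simp
    have e2: "end_pos n R f k j = dot_pos n R f (last B')"
      unfolding end_pos_unfold[of k j] t2[unfolded A_def B_def] using B'ne by simp
    have neq: "last A' \<noteq> last B'" using dec(4) A'ne B'ne by blast
    show ?thesis
    proof (cases "s = []")
      case True
      then have AA: "A' = A" "B' = B" using dec by auto
      have lhs: "path_gt n R f j k \<longleftrightarrow> rk < rj \<or> (rj = rk \<and> last A < last B)"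
        using path_gt_unfold[of j k] e1 e2 AA dot_pos_col[OF lj(1)] dot_pos_col[OF lk(1)] lj(2) lk(2)
        by auto
      obtain c rest where cr: "rev A = c # rest" using Ane by (cases "rev A") auto
      have cl: "c = last A" using cr by (metis last_rev list.sel(1) rev_rev_ident)
      obtain c' rest' where cr': "rev B = c' # rest'" using Bne by (cases "rev B") auto
      have cl': "c' = last B" using cr' by (metis last_rev list.sel(1) rev_rev_ident)
      have kj: "key j = rj # kap c # map kap rest @ [BIG]"
        using ej cr ur_R[OF lj(3)] by (simp add: key_def kap_row)
      have kk: "key k = rk # kap c' # map kap rest' @ [BIG]"
        using ek cr' ur_R[OF lk(3)] by (simp add: key_def kap_row)
      have cn: "c \<le> n" "c' \<le> n" using lj(1) lk(1) cl cl' by (auto simp: cols_def)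
      have kc: "kap c = 2*n+1-c" "kap c' = 2*n+1-c'" using kap_col lj(1) lk(1) cl cl' by auto
      have "c \<noteq> c'" using neq AA cl cl' by simp
      then have "kap c' \<noteq> kap c" using kc cn by auto
      then have rhs: "lless (key k) (key j) \<longleftrightarrow> rk < rj \<or> (rj = rk \<and> kap c' < kap c)"
        unfolding kj kk by auto
      show ?thesis unfolding lhs rhs using kc cn cl cl' by auto
    next
      case False
      let ?yj = "last A'" and ?yk = "last B'" and ?z = "hd s"
      have sz: "s = ?z # tl s" using False by simp
      have a1: "A' = butlast A' @ [?yj]" using A'ne by simp
      have b1: "B' = butlast B' @ [?yk]" using B'ne by simp
      have "rl j = (butlast A' @ [?yj]) @ (?z # tl s) @ [rj]" using ej dec(1) a1 sz by simp
      then have "rl j = butlast A' @ ?yj # ?z # (tl s @ [rj])" by simp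
      then have yj: "Dm ?yj" "par ?yj = ?z" using rl_step[OF gj] by blast+
      have "rl k = (butlast B' @ [?yk]) @ (?z # tl s) @ [rk]" using ek dec(2) b1 sz by simp
      then have "rl k = butlast B' @ ?yk # ?z # (tl s @ [rk])" by simp
      then have yk: "Dm ?yk" "par ?yk = ?z" using rl_step[OF gk] by blast+
      have "rj = rk"
      proof -
        have "last A = last s" "last B = last s" using dec False by auto
        then show ?thesis using lj(2) lk(2) by simp
      qed
      have kj: "key j = map kap (rj # rev s) @ kap ?yj # map kap (rev (butlast A')) @ [BIG]"
      proof -
        have ra: "rev A' = ?yj # rev (butlast A')" by (subst a1) (simp only: rev_append rev.simps append.simps)
        show ?thesis unfolding key_def ej dec(1) by (simp add: ra)
      qed
      have kk: "key k = map kap (rj # rev s) @ kap ?yk # map kap (rev (butlast B')) @ [BIG]"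
      proof -
        have rb: "rev B' = ?yk # rev (butlast B')" by (subst b1) (simp only: rev_append rev.simps append.simps)
        show ?thesis unfolding key_def ek dec(2) \<open>rj = rk\<close> by (simp add: rb)
      qed
      have yr: "?yj \<in> {1..n}" "?yk \<in> {1..n}" using yj(1) yk(1) Dm_range by auto
      have kne: "kap ?yk \<noteq> kap ?yj" using kap_inj[OF yr(2) yr(1)] neq by auto
      have rhs: "lless (key k) (key j) \<longleftrightarrow> kap ?yk < kap ?yj"
        unfolding kj kk using kne by simp
      show ?thesis
      proof (cases "?yj \<in> R")
        case True
        have "rr ?yj" using True yj(1) by (auto simp: Dm_def cols_def)
        then have zC: "?z \<in> C" using yj(2) True wc_facts[of ?yj] by (simp add: par_def)
        have "?yk \<in> R"
        proof (rule ccontr)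
          assume "?yk \<notin> R"
          then have "?z = tp ?yk" "?yk \<in> C" using yk by (auto simp: par_def Dm_def restricted_row_def)
          then show False using top_lt zC C_not_R by metis
        qed
        have rj': "rr ?yj" "rr ?yk" using True \<open>?yk \<in> R\<close> yj(1) yk(1) by (auto simp: Dm_def cols_def)
        have lhs: "path_gt n R f j k \<longleftrightarrow> ?yk < ?yj"
          using path_gt_unfold[of j k] e1 e2 dot_pos_rr[OF rj'(1)] dot_pos_rr[OF rj'(2)] yj yk True \<open>?yk \<in> R\<close>
          by (auto simp: par_def)
        show ?thesis unfolding lhs rhs using True \<open>?yk \<in> R\<close> by (simp add: kap_row)
      next
        case False
        then have cj: "?yj \<in> C" using yj(1) by (auto simp: Dm_def restricted_row_def)
        have "tp ?yj \<in> R" using top_lt[OF cj] by simp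
        then have zR: "?z \<in> R" using yj(2) C_not_R[OF cj] by (simp add: par_def)
        have "?yk \<notin> R"
        proof
          assume "?yk \<in> R"
          then have "?z = wc ?yk" "rr ?yk" using yk by (auto simp: par_def Dm_def cols_def)
          then show False using wc_facts zR C_not_R by metis
        qed
        then have ck: "?yk \<in> C" using yk(1) by (auto simp: Dm_def restricted_row_def)
        have lhs: "path_gt n R f j k \<longleftrightarrow> ?yj < ?yk"
          using path_gt_unfold[of j k] e1 e2 dot_pos_col[OF cj] dot_pos_col[OF ck] yj yk False \<open>?yk \<notin> R\<close>
          by (auto simp: par_def)
        have "?yj \<le> n" "?yk \<le> n" using yr by auto
        then show ?thesis unfolding lhs rhs using kap_col[OF cj] kap_col[OF ck] by auto
      qed
    qed
  qed
qed

end

context PT begin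

lemma main_inv: "tab_inv n R f = f3_21 (xi n R f)"
proof -
  let ?p = "xi n R f"
  have I: "distinct ?p" "set ?p = {1..n}" "sorted_wrt (\<lambda>a b. lless (key a) (key b)) ?p"
    "successively ok ?p" "?p \<noteq> [] \<longrightarrow> last ?p \<in> R"
    using xi_inv S_0 by (auto simp: Inv_def)
  let ?L = "length ?p"
  have inr: "?p ! i \<in> {1..n}" if "i < ?L" for i using I(2) that nth_mem by blast
  have desc: "(Suc b < ?L \<and> ?p ! Suc b < ?p ! b) \<longleftrightarrow> ?p ! b \<notin> R" if b: "b < ?L" for b
  proof
    assume h: "Suc b < ?L \<and> ?p ! Suc b < ?p ! b"
    show "?p ! b \<notin> R"
    proof
      assume "?p ! b \<in> R"
      then have "?p ! b < ?p ! Suc b" using successively_nth[OF I(4)] h by (auto simp: ok_def)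
      then show False using h by simp
    qed
  next
    assume nr: "?p ! b \<notin> R"
    have "Suc b < ?L"
    proof (rule ccontr)
      assume "\<not> Suc b < ?L"
      then have "b = ?L - 1" using b by simp
      moreover have "?p \<noteq> []" using b by auto
      ultimately have "?p ! b = last ?p" by (simp add: last_conv_nth)
      then show False using nr I(5) b by auto
    qed
    then show "Suc b < ?L \<and> ?p ! Suc b < ?p ! b"
      using successively_nth[OF I(4)] nr by (auto simp: ok_def)
  qed
  have ord: "a < b \<longleftrightarrow> lless (key (?p ! a)) (key (?p ! b))" if "a < ?L" "b < ?L" for a b
  proof
    assume "a < b" then show "lless (key (?p ! a)) (key (?p ! b))"
      using sorted_wrt_nth_less[OF I(3)] that by blast
  next
    assume l: "lless (key (?p ! a)) (key (?p ! b))"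
    show "a < b"
    proof (rule ccontr)
      assume "\<not> a < b"
      then have "b < a \<or> a = b" by auto
      then show False
      proof
        assume "b < a"
        then have "lless (key (?p ! b)) (key (?p ! a))" using sorted_wrt_nth_less[OF I(3)] that by blast
        then show False using l lless_asym by blast
      next
        assume "a = b" then show False using l lless_irrefl by simp
      qed
    qed
  qed
  define X where "X = {(a, b). a < b \<and> b + 1 < ?L \<and> ?p ! a > ?p ! b \<and> ?p ! b > ?p ! (b + 1)}"
  define Y where "Y = {(j, k). j \<in> C \<and> j < k \<and> k \<le> n \<and> k \<notin> set (AP j) \<and> path_gt n R f j k}"
  have keyY: "(j, k) \<in> Y \<longleftrightarrow> j \<in> C \<and> k \<in> {1..n} \<and> j < k \<and> lless (key k) (key j)" for j k
  proof
    assume "(j, k) \<in> Y"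
    then have h: "j \<in> C" "j < k" "k \<le> n" "k \<notin> set (AP j)" "path_gt n R f j k" by (auto simp: Y_def)
    have kr: "k \<in> {1..n}" using h by auto
    show "j \<in> C \<and> k \<in> {1..n} \<and> j < k \<and> lless (key k) (key j)" using h kr PG[OF h(1) kr h(2) h(4)] by blast
  next
    assume h: "j \<in> C \<and> k \<in> {1..n} \<and> j < k \<and> lless (key k) (key j)"
    have nk: "k \<notin> set (AP j)"
    proof
      assume "k \<in> set (AP j)"
      then have "lless (key j) (key k)" using anc_key h by auto
      then show False using h lless_asym by blast
    qed
    show "(j, k) \<in> Y" using h nk PG[of j k] by (auto simp: Y_def)
  qed
  define phi where "phi = (\<lambda>(a::nat, b::nat). (?p ! b, ?p ! a))"
  have bij: "bij_betw phi X Y"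
  proof (unfold bij_betw_def, intro conjI)
    show "inj_on phi X"
    proof (rule inj_onI)
      fix u v assume u: "u \<in> X" and v: "v \<in> X" and e: "phi u = phi v"
      obtain a b where ab: "u = (a, b)" by (cases u)
      obtain a' b' where ab': "v = (a', b')" by (cases v)
      have "a < ?L" "b < ?L" "a' < ?L" "b' < ?L" using u v ab ab' by (auto simp: X_def)
      then show "u = v" using e ab ab' I(1) by (auto simp: phi_def nth_eq_iff_index_eq)
    qed
    show "phi ` X = Y"
    proof (intro set_eqI iffI)
      fix q assume "q \<in> phi ` X"
      then obtain a b where ab: "(a, b) \<in> X" "q = (?p ! b, ?p ! a)" by (auto simp: phi_def)
      have h: "a < b" "Suc b < ?L" "?p ! a > ?p ! b" "?p ! b > ?p ! Suc b" using ab by (auto simp: X_def)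
      have bL: "b < ?L" "a < ?L" using h by auto
      have "?p ! b \<notin> R" using desc[OF bL(1)] h by blast
      then have jC: "?p ! b \<in> C" using inr[OF bL(1)] by (simp add: cols_def)
      have "lless (key (?p ! a)) (key (?p ! b))" using ord[OF bL(2) bL(1)] h by blast
      then show "q \<in> Y" unfolding ab(2) keyY using jC inr[OF bL(2)] h by auto
    next
      fix q assume "q \<in> Y"
      then obtain j k where q: "q = (j, k)" "(j, k) \<in> Y" by (cases q) auto
      then have h: "j \<in> C" "k \<in> {1..n}" "j < k" "lless (key k) (key j)" using keyY by auto
      have "j \<in> set ?p" "k \<in> set ?p" using h I(2) by (auto simp: cols_def)
      then obtain a b where ab: "a < ?L" "?p ! a = k" "b < ?L" "?p ! b = j" by (metis in_set_conv_nth)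
      have "a < b" using ord[OF ab(1) ab(3)] h ab by simp
      moreover have "?p ! b \<notin> R" using h ab C_not_R by simp
      then have "Suc b < ?L \<and> ?p ! Suc b < ?p ! b" using desc[OF ab(3)] by blast
      ultimately have "(a, b) \<in> X" using h ab by (auto simp: X_def)
      moreover have "phi (a, b) = q" using q ab by (simp add: phi_def)
      ultimately show "q \<in> phi ` X" by force
    qed
  qed
  have "card X = card Y" using bij_betw_same_card[OF bij] .
  then show ?thesis unfolding tab_inv_def f3_21_def X_def Y_def by simp
qed

end

theorem theorem2p1:
  fixes n :: nat and R :: "nat set" and f :: "nat \<Rightarrow> nat \<Rightarrow> bool"
  assumes "perm_tableau n R f"
  shows "tab_inv n R f = f32_1 (rev_compl n (xi n R f))
         \<and> tab_inv n R f = f3_21 (xi n R f)"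
proof -
  interpret PT n R f using assms by (unfold_locales)
  have m: "tab_inv n R f = f3_21 (xi n R f)" by (rule main_inv)
  have "set (xi n R f) = {1..n}" using xi_inv S_0 by (simp add: Inv_def)
  then have "\<forall>x\<in>set (xi n R f). x \<le> n" by auto
  then have "f32_1 (rev_compl n (xi n R f)) = f3_21 (xi n R f)" by (rule f32_rc)
  then show ?thesis using m by simp
qed

end
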